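(* Assume $a>0$. For $r\in(0,1]$ and $t>0$ let $x_{\rm L}(r,t,a)$ denote the left edge of the support of the three-parametric MP density $\rho(\cdot;r,t,a)$, namely the middle real root of the cubic \[ S(x;r,t,a)=4ax^3-\{8a^2+4a(3r+2)t-t^2\}x^2+2\big[2a^3-2a^2(5r-2)t+a\{r(6r-1)+1\}t^2-(r+1)t^3\big]x+(r-1)^2t^2\{a^2-a(4r-2)t+t^2\}. \] (i) The time-evolution of the support touches the origin $x=0$ (i.e. $x_{\rm L}(r,t,a)=0$ for some $t>0$) if and only if $r=1$; for $r\in(0,1)$ one has $x_{\rm L}(r,t,a)>0$. (ii) When $r=1$, with the critical time $t_{\rm c}(a):=a$, one has $x_{\rm L}(1,t,a)>0$ for $0\le t<t_{\rm c}(a)$ and $x_{\rm L}(1,t,a)=0$ for all $t\ge t_{\rm c}(a)$. Moreover \[ x_{\rm L}(1,t,a)\simeq\frac{4}{27a^2}(t_{\rm c}(a)-t)^{3}\quad\text{as } t\nearrow t_{\rm c}(a). \]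
   Context: The three-parametric MP density $\rho(x;r,t,a)$ ($r\in(0,1]$, $t>0$, $a\ge0$) is the density of the weak limit, as $N,M\to\infty$ with $N/M\to r$, of $\frac1N\sum_{j}\delta_{X^N_j(t)/M}$, where $X^N_j$ solve $dX^N_j=2\sqrt{X^N_j}dB_j+2(M-N+1)dt+4X^N_j\sum_{k\neq j}\frac{dt}{X^N_j-X^N_k}$ with independent standard Brownian motions $B_j$ and $X^N_j(0)=aM$; equivalently its Stieltjes transform $G$ solves $z=\frac1G+\frac{t}{1-rtG}+\frac{a}{(1-rtG)^2}$. Its support is $[x_{\rm L}(r,t,a),x_{\rm R}(r,t,a)]$ where $x_{\rm L}\le x_{\rm R}$ are the two largest of the three real roots of $S(\cdot;r,t,a)$. The notation $f\simeq g$ means $f/g\to1$. *)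

theory Defs
  imports "HOL-Analysis.Analysis" "HOL-Library.Landau_Symbols"
begin

definition S_cubic :: "real \<Rightarrow> real \<Rightarrow> real \<Rightarrow> real \<Rightarrow> real" where
  "S_cubic x r t a =
     4*a*x^3 - (8*a^2 + 4*a*(3*r+2)*t - t^2)*x^2
     + 2*(2*a^3 - 2*a^2*(5*r-2)*t + a*(r*(6*r-1)+1)*t^2 - (r+1)*t^3)*x
     + (r-1)^2*t^2*(a^2 - a*(4*r-2)*t + t^2)"

definition xL :: "real \<Rightarrow> real \<Rightarrow> real \<Rightarrow> real" where
  "xL r t a = (THE y. \<exists>y1 y3. y1 \<le> y \<and> y \<le> y3 \<and>
       (\<forall>x. S_cubic x r t a = 4*a*(x-y1)*(x-y)*(x-y3)))"

definition tc :: "real \<Rightarrow> real" where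
  "tc a = a"

end

theory Submission
  imports Defs
begin


lemma mid_unique:
  fixes y1 y2 y3 z1 z2 z3 :: real
  assumes "y1 \<le> y2" "y2 \<le> y3" "z1 \<le> z2" "z2 \<le> z3"
    and h: "\<And>x. (x-y1)*(x-y2)*(x-y3) = (x-z1)*(x-z2)*(x-z3)"
  shows "y2 = z2"
proof -
  have a1: "(y1-z1)*(y1-z2)*(y1-z3) = 0" using h[of y1] by simp
  have a2: "(z1-y1)*(z1-y2)*(z1-y3) = 0" using h[of z1] by simp
  have a3: "(y3-z1)*(y3-z2)*(y3-z3) = 0" using h[of y3] by simp
  have a4: "(z3-y1)*(z3-y2)*(z3-y3) = 0" using h[of z3] by simp
  have "y1 \<ge> z1" using a1 assms(3,4) by auto
  moreover have "z1 \<ge> y1" using a2 assms(1,2) by auto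
  ultimately have e1: "y1 = z1" by simp
  have "y3 \<le> z3" using a3 assms(3,4) by auto
  moreover have "z3 \<le> y3" using a4 assms(1,2) by auto
  ultimately have e3: "y3 = z3" by simp
  have "(1-y1)*(1-y2)*(1-y3) + (-1-y1)*(-1-y2)*(-1-y3) - 2*((0-y1)*(0-y2)*(0-y3))
      = (1-z1)*(1-z2)*(1-z3) + (-1-z1)*(-1-z2)*(-1-z3) - 2*((0-z1)*(0-z2)*(0-z3))"
    using h[of 1] h[of "-1"] h[of 0] by simp
  hence "y1+y2+y3 = z1+z2+z3" by (simp add: algebra_simps)
  thus ?thesis using e1 e3 by simp
qed

lemma xL_eq:
  assumes "a > 0" "y1 \<le> y2" "y2 \<le> y3"
    and h: "\<And>x. S_cubic x r t a = 4*a*(x-y1)*(x-y2)*(x-y3)"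
  shows "xL r t a = y2"
  unfolding xL_def
proof (rule the_equality)
  show "\<exists>y1' y3'. y1' \<le> y2 \<and> y2 \<le> y3' \<and> (\<forall>x. S_cubic x r t a = 4*a*(x-y1')*(x-y2)*(x-y3'))"
    using assms by blast
next
  fix y assume "\<exists>z1 z3. z1 \<le> y \<and> y \<le> z3 \<and> (\<forall>x. S_cubic x r t a = 4*a*(x-z1)*(x-y)*(x-z3))"
  then obtain z1 z3 where z: "z1 \<le> y" "y \<le> z3" "\<And>x. S_cubic x r t a = 4*a*(x-z1)*(x-y)*(x-z3)" by blast
  have "\<And>x. (x-z1)*(x-y)*(x-z3) = (x-y1)*(x-y2)*(x-y3)"
  proof -
    fix x have "4*a*((x-z1)*(x-y)*(x-z3)) = 4*a*((x-y1)*(x-y2)*(x-y3))"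
    proof -
      have "4*a*(x-z1)*(x-y)*(x-z3) = 4*a*(x-y1)*(x-y2)*(x-y3)" using z(3)[of x] h[of x] by linarith
      thus ?thesis by (metis mult.assoc)
    qed
    moreover have "4*a \<noteq> 0" using assms(1) by simp
    ultimately show "(x-z1)*(x-y)*(x-z3) = (x-y1)*(x-y2)*(x-y3)" using mult_left_cancel by blast
  qed
  thus "y = y2" using mid_unique[OF z(1,2) assms(2,3)] by blast
qed

lemma cubic_factor:
  fixes A B C D u q w :: real
  assumes "u < q" "q < w"
    and pu: "A*u^3+B*u^2+C*u+D = 0" and pv: "A*q^3+B*q^2+C*q+D = 0"
    and pw: "A*w^3+B*w^2+C*w+D = 0"
  shows "A*x^3+B*x^2+C*x+D = A*(x-u)*(x-q)*(x-w)"
proof -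
  have "(u-q)*(A*(u^2+u*q+q^2)+B*(u+q)+C) = 0" using pu pv by (simp add: algebra_simps power2_eq_square power3_eq_cube)
  hence q1: "A*(u^2+u*q+q^2)+B*(u+q)+C = 0" using assms(1) by simp
  have "(u-w)*(A*(u^2+u*w+w^2)+B*(u+w)+C) = 0" using pu pw by (simp add: algebra_simps power2_eq_square power3_eq_cube)
  hence q2: "A*(u^2+u*w+w^2)+B*(u+w)+C = 0" using assms by simp
  have "(q-w)*(A*(u+q+w)+B) = 0" using q1 q2 by (simp add: algebra_simps power2_eq_square)
  hence hB: "B = -A*(u+q+w)" using assms by simp
  have hC: "C = A*(u*q+u*w+q*w)" using q1 hB by (simp add: algebra_simps power2_eq_square)
  have hD: "D = -A*u*q*w" using pu hB hC by (simp add: algebra_simps power2_eq_square power3_eq_cube)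
  show ?thesis by (simp only: hB hC hD) (simp add: algebra_simps power2_eq_square power3_eq_cube)
qed



lemma cubic_big:
  fixes A B C D :: real
  assumes "A > 0"
  shows "\<exists>K. \<forall>x\<ge>K. A*x^3+B*x^2+C*x+D > 0"
proof (intro exI allI impI)
  let ?s = "\<bar>B\<bar>+\<bar>C\<bar>+\<bar>D\<bar>"
  fix x assume x: "x \<ge> 1 + ?s/A"
  have s0: "?s/A \<ge> 0" using assms by simp
  have x1: "x \<ge> 1" using x s0 by linarith
  have "A*x \<ge> A*(1 + ?s/A)" using x assms by (simp add: mult_left_mono)
  also have "A*(1 + ?s/A) = A + ?s" using assms by (simp add: field_simps)
  finally have "A*x \<ge> A + ?s" .
  hence ax: "A*x - ?s > 0" using assms by linarith
  have "-\<bar>B\<bar>*x^2 \<le> B*x^2" by (rule mult_right_mono) auto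
  hence bx: "B*x^2 \<ge> -\<bar>B\<bar>*x^2" .
  have "\<bar>C\<bar>*x \<le> \<bar>C\<bar>*x^2" using x1 by (simp add: mult_left_mono power2_eq_square)
  moreover have "-\<bar>C\<bar>*x \<le> C*x" using x1 by (intro mult_right_mono) auto
  ultimately have cx: "C*x \<ge> -\<bar>C\<bar>*x^2" by linarith
  have "\<bar>D\<bar> \<le> \<bar>D\<bar>*x^2" using x1 by (simp add: mult_le_cancel_left1 one_le_power)
  hence dx: "D \<ge> -\<bar>D\<bar>*x^2" by linarith
  have "A*x^3+B*x^2+C*x+D \<ge> x^2*(A*x - ?s)" using bx cx dx by (simp add: algebra_simps power3_eq_cube power2_eq_square)
  moreover have "x^2*(A*x - ?s) > 0" using ax x1 by simp
  ultimately show "A*x^3+B*x^2+C*x+D > 0" by linarith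
qed

lemma cubic_three_roots:
  fixes A B C D w :: real
  assumes "A > 0" "w > 0" and p0: "D > 0" and pv: "A*w^3+B*w^2+C*w+D < 0"
  shows "\<exists>r1 r2 r3. r1 < 0 \<and> 0 < r2 \<and> r2 < w \<and> w < r3 \<and>
           (\<forall>x. A*x^3+B*x^2+C*x+D = A*(x-r1)*(x-r2)*(x-r3))"
proof -
  define p where "p = (\<lambda>x::real. A*x^3+B*x^2+C*x+D)"
  have cont: "continuous_on S p" for S unfolding p_def by (intro continuous_intros)
  obtain K1 where K1: "\<forall>x\<ge>K1. p x > 0" using cubic_big[OF assms(1), of B C D] unfolding p_def by blast
  obtain K2 where K2: "\<forall>x\<ge>K2. A*x^3+(-B)*x^2+C*x+(-D) > 0" using cubic_big[OF assms(1)] by blast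
  define M1 where "M1 = max K1 (w+1)"
  define M2 where "M2 = max K2 1"
  have pM1: "p M1 > 0" using K1 M1_def by simp
  have pM2: "p (-M2) < 0"
  proof -
    have "A*M2^3+(-B)*M2^2+C*M2+(-D) > 0" using K2 M2_def by simp
    thus ?thesis unfolding p_def by (simp add: power3_eq_cube power2_eq_square algebra_simps)
  qed
  have M2: "M2 \<ge> 1" using M2_def by simp
  obtain r1 where r1: "-M2 \<le> r1" "r1 \<le> 0" "p r1 = 0"
    using IVT'[of p "-M2" 0 0] pM2 p0 M2 cont unfolding p_def by force
  obtain r2 where r2: "0 \<le> r2" "r2 \<le> w" "p r2 = 0"
    using IVT2'[of p w 0 0] pv p0 assms(2) cont unfolding p_def by force
  obtain r3 where r3: "w \<le> r3" "r3 \<le> M1" "p r3 = 0"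
    using IVT'[of p w 0 M1] pv pM1 M1_def cont unfolding p_def by force
  have "r1 \<noteq> 0" "r2 \<noteq> 0" using r1 r2 p0 unfolding p_def by auto
  moreover have "r2 \<noteq> w" "r3 \<noteq> w" using r2 r3 pv unfolding p_def by auto
  ultimately have o: "r1 < 0" "0 < r2" "r2 < w" "w < r3" using r1 r2 r3 by auto
  have "\<forall>x. A*x^3+B*x^2+C*x+D = A*(x-r1)*(x-r2)*(x-r3)"
    using cubic_factor[of r1 r2 r3 A B C D] o r1(3) r2(3) r3(3) unfolding p_def by auto
  thus ?thesis using o by blast
qed

lemma S_poly: "S_cubic x r t a = (4*a)*x^3 + (-(8*a^2 + 4*a*(3*r+2)*t - t^2))*x^2
     + (2*(2*a^3 - 2*a^2*(5*r-2)*t + a*(r*(6*r-1)+1)*t^2 - (r+1)*t^3))*x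
     + (r-1)^2*t^2*(a^2 - a*(4*r-2)*t + t^2)"
  unfolding S_cubic_def by (simp add: algebra_simps)

lemma S_at: "S_cubic (a+t) r t a = r*t*((r-4)*t^3 + a*t^2*(-24+22*r-4*r^2) + a^2*t*(13*r-48) - 32*a^3)"
  unfolding S_cubic_def by algebra

lemma xL_pos_rlt1:
  assumes a: "a > 0" and r: "0 < r" "r < 1" and t: "t > 0"
  shows "xL r t a > 0"
proof -
  have q: "a^2 - a*(4*r-2)*t + t^2 > 0"
  proof -
    have "a^2 - a*(4*r-2)*t + t^2 = (a-t)^2 + 4*(1-r)*(a*t)" by (simp add: algebra_simps power2_eq_square)
    moreover have "4*(1-r)*(a*t) > 0" using a r t by simp
    ultimately show ?thesis by (smt (verit) zero_le_power2)
  qed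
  have D: "(r-1)^2*t^2*(a^2 - a*(4*r-2)*t + t^2) > 0" using q r t by simp
  have P: "(r-4)*t^3 + a*t^2*(-24+22*r-4*r^2) + a^2*t*(13*r-48) - 32*a^3 < 0"
  proof -
    have "(r-4)*t^3 < 0" using r t by (simp add: mult_neg_pos)
    moreover have "-24+22*r-4*r^2 < 0" using r zero_le_power2[of r] by linarith
    hence "a*t^2*(-24+22*r-4*r^2) < 0" using a t by (simp add: mult_pos_neg)
    moreover have "a^2*t*(13*r-48) < 0" using a t r by (simp add: mult_pos_neg)
    moreover have "32*a^3 > 0" using a by simp
    ultimately show ?thesis by linarith
  qed
  have Sv: "S_cubic (a+t) r t a < 0" unfolding S_at using P r t by (simp add: mult_pos_neg)
  obtain r1 r2 r3 where rr: "r1 < 0" "0 < r2" "r2 < a+t" "a+t < r3"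
    and f: "\<forall>x. (4*a)*x^3 + (-(8*a^2 + 4*a*(3*r+2)*t - t^2))*x^2
     + (2*(2*a^3 - 2*a^2*(5*r-2)*t + a*(r*(6*r-1)+1)*t^2 - (r+1)*t^3))*x
     + (r-1)^2*t^2*(a^2 - a*(4*r-2)*t + t^2) = (4*a)*(x-r1)*(x-r2)*(x-r3)"
    using cubic_three_roots[of "4*a" "a+t", OF _ _ D] Sv a t unfolding S_poly by force
  have "xL r t a = r2"
    by (rule xL_eq[of a r1 r2 r3]) (use a rr f S_poly in auto)
  thus ?thesis using rr by simp
qed



definition bb :: "real \<Rightarrow> real \<Rightarrow> real" where "bb a t = 8*a^2+20*a*t-t^2"
definition DD :: "real \<Rightarrow> real \<Rightarrow> real" where "DD a t = t*(t+8*a)^3"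
definition qm :: "real \<Rightarrow> real \<Rightarrow> real" where "qm a t = (bb a t - sqrt (DD a t))/(8*a)"
definition qp :: "real \<Rightarrow> real \<Rightarrow> real" where "qp a t = (bb a t + sqrt (DD a t))/(8*a)"

lemma bbDD: "(bb a t)^2 - DD a t = 64*a*(a-t)^3"
  unfolding bb_def DD_def by algebra

lemma r1_fact:
  assumes a: "a > 0" and t: "t \<ge> 0"
  shows "S_cubic x 1 t a = 4*a*(x-0)*(x - qm a t)*(x - qp a t)"
proof -
  let ?s = "sqrt (DD a t)"
  have Dn: "DD a t \<ge> 0" unfolding DD_def using a t by simp
  have s2: "?s^2 = DD a t" using Dn by simp
  have h1: "S_cubic x 1 t a = x*(4*a*x^2 - bb a t*x + 4*(a-t)^3)"
    unfolding S_cubic_def bb_def by (simp add: algebra_simps power2_eq_square power3_eq_cube)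
  have h3: "4*a*(x - qm a t)*(x - qp a t) = 4*a*x^2 - bb a t*x + ((bb a t)^2 - ?s^2)/(16*a)"
    unfolding qm_def qp_def using a by (simp add: field_simps power2_eq_square)
  have "((bb a t)^2 - ?s^2)/(16*a) = 4*(a-t)^3" using s2 bbDD[of a t] a by (simp add: field_simps)
  hence e: "4*a*(x - qm a t)*(x - qp a t) = 4*a*x^2 - bb a t*x + 4*(a-t)^3" using h3 by simp
  have "4*a*(x-0)*(x - qm a t)*(x - qp a t) = x*(4*a*(x - qm a t)*(x - qp a t))" by (simp add: algebra_simps)
  also have "\<dots> = x*(4*a*x^2 - bb a t*x + 4*(a-t)^3)" by (simp only: e)
  finally show ?thesis using h1 by linarith
qed

lemma xL_1_lt:
  assumes a: "a > 0" and t: "0 \<le> t" "t < a"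
  shows "xL 1 t a = qm a t" "qm a t > 0"
proof -
  have Dn: "DD a t \<ge> 0" unfolding DD_def using a t by simp
  have bpos: "bb a t > 0" unfolding bb_def using a t
    by (smt (verit) mult_pos_pos mult_nonneg_nonneg mult_right_mono power2_eq_square)
  have "64*a*(a-t)^3 > 0" using a t by simp
  hence "DD a t < (bb a t)^2" using bbDD[of a t] by linarith
  hence "sqrt (DD a t) < sqrt ((bb a t)^2)" by (simp only: real_sqrt_less_iff)
  hence "sqrt (DD a t) < bb a t" using bpos by simp
  thus qpos: "qm a t > 0" unfolding qm_def using a by simp
  have "qm a t \<le> qp a t" unfolding qm_def qp_def using a real_sqrt_ge_zero[OF Dn] by (intro divide_right_mono) auto
  thus "xL 1 t a = qm a t"
    using xL_eq[of a 0 "qm a t" "qp a t" 1 t] r1_fact[of a t] a t qpos by simp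
qed

lemma xL_1_ge:
  assumes a: "a > 0" and t: "a \<le> t"
  shows "xL 1 t a = 0"
proof -
  have t0: "t \<ge> 0" using a t by simp
  have Dn: "DD a t \<ge> 0" unfolding DD_def using a t0 by simp
  have "0 \<le> (t-a)^3" using t by simp
  moreover have "(a-t)^3 = -((t-a)^3)" by (simp add: power3_eq_cube algebra_simps)
  ultimately have "64*a*(a-t)^3 \<le> 0" using a by (simp add: mult_nonneg_nonneg)
  hence "(bb a t)^2 \<le> DD a t" using bbDD[of a t] by linarith
  hence "sqrt ((bb a t)^2) \<le> sqrt (DD a t)" by (simp only: real_sqrt_le_iff)
  hence sb: "\<bar>bb a t\<bar> \<le> sqrt (DD a t)" by simp
  have "qm a t \<le> 0" unfolding qm_def using a sb by (simp add: divide_nonpos_pos)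
  moreover have "0 \<le> qp a t" unfolding qp_def using a sb by simp
  ultimately show ?thesis
    using xL_eq[of a "qm a t" 0 "qp a t" 1 t] r1_fact[of a t] a t0
    by (simp add: mult.commute mult.left_commute)
qed

lemma den_aux:
  fixes a :: real assumes "a > 0" shows "27 * (a * a) + sqrt (a * (729 * a ^ 3)) \<noteq> 0"
proof -
  have "a * (729 * a ^ 3) \<ge> 0" using assms by simp
  hence "sqrt (a * (729 * a ^ 3)) \<ge> 0" by simp
  moreover have "a*a > 0" using assms by simp
  ultimately show ?thesis by linarith
qed

lemma ratio_aux:
  fixes a S c :: real
  assumes "a > 0" "S > 0" "c \<noteq> 0"
  shows "54*a^2/S = (8*c/S)/(4/(27*a^2)*c)"
  using assms by (simp add: field_simps)

lemma asym:
  assumes a: "a > 0"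
  shows "(\<lambda>t. xL 1 t a) \<sim>[at_left a] (\<lambda>t. 4 / (27 * a^2) * (a - t)^3)"
proof (rule asymp_equivI')
  have ev: "eventually (\<lambda>t. t \<in> {0<..<a}) (at_left a)" using eventually_at_left_real a by blast
  have eq: "eventually (\<lambda>t. 54*a^2/(bb a t + sqrt (DD a t)) = xL 1 t a / (4 / (27 * a^2) * (a - t)^3)) (at_left a)"
    using ev
  proof eventually_elim
    case (elim t)
    hence t: "0 < t" "t < a" by auto
    have Dn: "DD a t \<ge> 0" unfolding DD_def using a t by simp
    have bpos: "bb a t > 0" unfolding bb_def using a t
      by (smt (verit) mult_pos_pos mult_nonneg_nonneg mult_right_mono power2_eq_square)
    have sp: "bb a t + sqrt (DD a t) > 0" using bpos real_sqrt_ge_zero[OF Dn] by linarith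
    have "(bb a t - sqrt (DD a t))*(bb a t + sqrt (DD a t)) = (bb a t)^2 - DD a t"
      using Dn by (simp add: algebra_simps power2_eq_square)
    hence pr: "(bb a t - sqrt (DD a t))*(bb a t + sqrt (DD a t)) = 64*a*(a-t)^3" using bbDD by simp
    have qmv: "qm a t = 8*(a-t)^3/(bb a t + sqrt (DD a t))"
      unfolding qm_def using sp a pr by (simp add: field_simps)
    have at: "(a-t)^3 \<noteq> 0" using t by simp
    have x: "xL 1 t a = 8*(a-t)^3/(bb a t + sqrt (DD a t))" using xL_1_lt(1)[of a t] a t qmv by simp
    show ?case unfolding x using ratio_aux[OF a sp at] .
  qed
  have lim: "((\<lambda>t. 54*a^2/(bb a t + sqrt (DD a t))) \<longlongrightarrow> 54*a^2/(bb a a + sqrt (DD a a))) (at_left a)"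
    unfolding bb_def DD_def by (intro tendsto_intros) (use a den_aux[OF a] in \<open>simp add: power2_eq_square\<close>)
  have "DD a a = (27*a^2)^2" unfolding DD_def by (simp add: power2_eq_square power3_eq_cube)
  hence "sqrt (DD a a) = \<bar>27*a^2\<bar>" by (simp only: real_sqrt_abs)
  hence "sqrt (DD a a) = 27*a^2" by simp
  hence "54*a^2/(bb a a + sqrt (DD a a)) = 1" unfolding bb_def using a by (simp add: power2_eq_square)
  hence "((\<lambda>t. 54*a^2/(bb a t + sqrt (DD a t))) \<longlongrightarrow> 1) (at_left a)" using lim by (metis (no_types, lifting))
  thus "((\<lambda>t. xL 1 t a / (4 / (27 * a^2) * (a - t)^3)) \<longlongrightarrow> 1) (at_left a)"
    using eq by (rule Lim_transform_eventually)
qed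

theorem proposition1p2:
  fixes a :: real
  assumes "a > 0"
  shows "(\<forall>r. 0 < r \<and> r \<le> 1 \<longrightarrow> ((\<exists>t>0. xL r t a = 0) \<longleftrightarrow> r = 1)) \<and>
    (\<forall>r t. 0 < r \<and> r < 1 \<and> t > 0 \<longrightarrow> xL r t a > 0) \<and>
    (\<forall>t. 0 \<le> t \<and> t < tc a \<longrightarrow> xL 1 t a > 0) \<and>
    (\<forall>t. t \<ge> tc a \<longrightarrow> xL 1 t a = 0) \<and>
    ((\<lambda>t. xL 1 t a) \<sim>[at_left (tc a)] (\<lambda>t. 4 / (27 * a^2) * (tc a - t)^3))"
proof (intro conjI allI impI)
  fix r :: real assume r: "0 < r \<and> r \<le> 1"
  show "(\<exists>t>0. xL r t a = 0) \<longleftrightarrow> r = 1"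
  proof
    assume "\<exists>t>0. xL r t a = 0"
    then obtain t where "t > 0" "xL r t a = 0" by blast
    thus "r = 1" using xL_pos_rlt1[OF assms, of r t] r by force
  next
    assume "r = 1" thus "\<exists>t>0. xL r t a = 0" using xL_1_ge[OF assms, of a] assms by auto
  qed
next
  fix r t :: real assume "0 < r \<and> r < 1 \<and> 0 < t"
  thus "xL r t a > 0" using xL_pos_rlt1[OF assms] by blast
next
  fix t assume "0 \<le> t \<and> t < tc a"
  thus "xL 1 t a > 0" using xL_1_lt[OF assms] unfolding tc_def by auto
next
  fix t assume "t \<ge> tc a"
  thus "xL 1 t a = 0" using xL_1_ge[OF assms] unfolding tc_def by auto
next
  show "(\<lambda>t. xL 1 t a) \<sim>[at_left (tc a)] (\<lambda>t. 4 / (27 * a^2) * (tc a - t)^3)"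
    unfolding tc_def using asym[OF assms] .
qed

end
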